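(* For $n \in \mathbb{N}_0$ let $\kappa(n)$ denote the maximal number of consecutive $1$s in the binary expansion of $n$ (so $\kappa(0)=0$, and e.g. $\kappa(1234)=\kappa([10011010010]_2)=2$). Define $f\colon\mathbb{N}_0\to\{0,1\}$ by $f(n)=1$ if $\kappa(n)$ is odd and $f(n)=0$ otherwise. Then $f$ is asymptotically $2$-automatic but there is no $2$-automatic sequence $\tilde f\colon\mathbb{N}_0\to\{0,1\}$ with $f\simeq\tilde f$.
   Context: $\mathbb{N}_0=\{0,1,2,\dots\}$. A property holds for almost all $n\in\mathbb{N}_0$ if the set of $n$ where it fails has upper density $\limsup_{N\to\infty}|\cdot\cap\{0,\dots,N-1\}|/N$ equal to $0$. Sequences $f,g$ are asymptotically equal, $f\simeq g$, if $f(n)=g(n)$ for almost all $n$. The $k$-kernel of $f$ is $\mathcal{N}_k(f) = \{ n \mapsto f(k^\alpha n + r) : \alpha, r \in \mathbb{N}_0,\ r < k^\alpha\}$; $f$ is $k$-automatic if $\mathcal{N}_k(f)$ is finite, and asymptotically $k$-automatic if $\mathcal{N}_k(f)/{\simeq}$ is finite. *)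

theory Defs
  imports Main "HOL-Library.Liminf_Limsup" "HOL-Library.Extended_Real"
begin

definition upper_density_zero :: "nat set \<Rightarrow> bool" where
  "upper_density_zero A \<longleftrightarrow>
     limsup (\<lambda>N::nat. ereal (real (card (A \<inter> {..<N})) / real N)) = 0"

definition almost_all :: "(nat \<Rightarrow> bool) \<Rightarrow> bool" where
  "almost_all P \<longleftrightarrow> upper_density_zero {n. \<not> P n}"

definition asymp_eq :: "(nat \<Rightarrow> 'a) \<Rightarrow> (nat \<Rightarrow> 'a) \<Rightarrow> bool" where
  "asymp_eq f g \<longleftrightarrow> almost_all (\<lambda>n. f n = g n)"

definition kernel :: "nat \<Rightarrow> (nat \<Rightarrow> 'a) \<Rightarrow> (nat \<Rightarrow> 'a) set" where
  "kernel k f = {(\<lambda>n. f (k ^ a * n + r)) | a r. r < k ^ a}"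

definition automatic :: "nat \<Rightarrow> (nat \<Rightarrow> 'a) \<Rightarrow> bool" where
  "automatic k f \<longleftrightarrow> finite (kernel k f)"

definition asymp_automatic :: "nat \<Rightarrow> (nat \<Rightarrow> 'a) \<Rightarrow> bool" where
  "asymp_automatic k f \<longleftrightarrow>
     finite (kernel k f // {(g, h). asymp_eq g h})"

definition kappa :: "nat \<Rightarrow> nat" where
  "kappa n = Max {l. \<exists>i. \<forall>j<l. bit n (i + j)}"

definition kappa_parity :: "nat \<Rightarrow> nat" where
  "kappa_parity n = (if odd (kappa n) then 1 else 0)"

end

theory Submission
  imports Defs
begin


definition win :: "nat \<Rightarrow> nat \<Rightarrow> nat \<Rightarrow> bool" where
  "win x i l \<longleftrightarrow> (\<forall>j<l. bit x (i + j))"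

lemma win_mono: "win x i l \<Longrightarrow> l' \<le> l \<Longrightarrow> win x i l'"
  unfolding win_def by auto

lemma bit_le: "bit (x::nat) i \<Longrightarrow> 2 ^ i \<le> x"
proof -
  assume "bit x i"
  then have "odd (x div 2 ^ i)" by (simp add: bit_iff_odd)
  then have "x div 2 ^ i \<ge> 1" by (cases "x div 2 ^ i") auto
  then show ?thesis
    using div_greater_zero_iff by force
qed

lemma bit_lt: "bit (x::nat) i \<Longrightarrow> i < x"
  using bit_le[of x i] less_exp[of i] by linarith

lemma win_bound: "win x i l \<Longrightarrow> l \<le> x"
proof (cases l)
  case (Suc l')
  assume "win x i l"
  then have "bit x (i + l')" using Suc unfolding win_def by auto
  then have "i + l' < x" by (rule bit_lt)
  then show ?thesis using Suc by simp
qed simp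

lemma kappa_fin: "finite {l. \<exists>i. win x i l}"
proof (rule finite_subset[of _ "{..x}"])
  show "{l. \<exists>i. win x i l} \<subseteq> {..x}" using win_bound by blast
qed simp

lemma kappa_alt: "kappa x = Max {l. \<exists>i. win x i l}"
  unfolding kappa_def win_def ..

lemma kappa_mem: "kappa x \<in> {l. \<exists>i. win x i l}"
proof -
  have "win x 0 0" by (simp add: win_def)
  then have ne: "{l. \<exists>i. win x i l} \<noteq> {}" by blast
  show ?thesis unfolding kappa_alt by (rule Max_in[OF kappa_fin ne])
qed

lemma kappa_win: "\<exists>i. win x i (kappa x)"
  using kappa_mem[of x] by (rule CollectD)

lemma kappa_max: "win x i l \<Longrightarrow> l \<le> kappa x"
proof -
  assume "win x i l"
  then have "l \<in> {l. \<exists>i. win x i l}" by blast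
  then show ?thesis unfolding kappa_alt by (rule Max_ge[OF kappa_fin])
qed

lemma kappa_eqI: "win x i k \<Longrightarrow> (\<And>i. \<not> win x i (Suc k)) \<Longrightarrow> kappa x = k"
proof -
  assume a: "win x i k" and b: "\<And>i. \<not> win x i (Suc k)"
  have "k \<le> kappa x" using a by (rule kappa_max)
  moreover have "kappa x \<le> k"
  proof (rule ccontr)
    assume c: "\<not> kappa x \<le> k"
    obtain i' where "win x i' (kappa x)" using kappa_win by blast
    moreover have "Suc k \<le> kappa x" using c by simp
    ultimately have "win x i' (Suc k)" by (rule win_mono)
    then show False using b by blast
  qed
  ultimately show ?thesis by simp
qed

lemma not_win_Suc_kappa: "\<not> win x i (Suc (kappa x))"
proof
  assume "win x i (Suc (kappa x))"
  then have "Suc (kappa x) \<le> kappa x" by (rule kappa_max)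
  then show False by simp
qed

lemma bit_concat:
  assumes "r < 2 ^ A"
  shows "bit (2 ^ A * n + r :: nat) x = (if x < A then bit r x else bit n (x - A))"
proof (cases "x < A")
  case True
  have "bit (2 ^ A * n + r) x = bit (take_bit A (2 ^ A * n + r)) x"
    using True by (simp add: bit_take_bit_iff)
  also have "take_bit A (2 ^ A * n + r) = r" using assms by (simp add: take_bit_eq_mod)
  finally show ?thesis using True by simp
next
  case False
  have "bit (drop_bit A (2 ^ A * n + r)) (x - A) = bit (2 ^ A * n + r) x"
    using False by (simp add: bit_drop_bit_eq)
  moreover have "drop_bit A (2 ^ A * n + r) = n" using assms by (simp add: drop_bit_eq_div)
  ultimately show ?thesis using False by simp
qed

lemma bit_small: "(r::nat) < 2 ^ B \<Longrightarrow> B \<le> x \<Longrightarrow> \<not> bit r x"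
proof
  assume "r < 2 ^ B" "B \<le> x" "bit r x"
  then have "2 ^ x \<le> r" by (simp add: bit_le)
  moreover have "(2::nat) ^ B \<le> 2 ^ x" using \<open>B \<le> x\<close> by simp
  ultimately show False using \<open>r < 2 ^ B\<close> by linarith
qed

lemma kappa_sep:
  assumes "r < 2 ^ B"
  shows "kappa (2 ^ Suc B * n + r) = max (kappa n) (kappa r)"
proof -
  let ?m = "2 ^ Suc B * n + r"
  have r2: "r < 2 ^ Suc B" using assms by simp
  have bm: "bit ?m x = (if x < Suc B then bit r x else bit n (x - Suc B))" for x
    using bit_concat[OF r2] .
  show ?thesis
  proof (cases "kappa n \<le> kappa r")
    case True
    obtain i where i: "win r i (kappa r)" using kappa_win by blast
    have "win ?m i (kappa r)"
      unfolding win_def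
    proof (intro allI impI)
      fix j assume "j < kappa r"
      then have "bit r (i + j)" using i by (auto simp: win_def)
      then have "i + j < B" using bit_small[OF assms] by (meson not_le)
      then show "bit ?m (i + j)" using bm \<open>bit r (i+j)\<close> by simp
    qed
    moreover have "\<not> win ?m i' (Suc (kappa r))" for i'
    proof
      assume w: "win ?m i' (Suc (kappa r))"
      show False
      proof (cases "i' \<ge> Suc B")
        case True
        have "win n (i' - Suc B) (Suc (kappa r))"
          using w True unfolding win_def bm by (auto simp: algebra_simps)
        then have "Suc (kappa r) \<le> kappa n" by (rule kappa_max)
        then show False using \<open>kappa n \<le> kappa r\<close> by simp
      next
        case False
        show False
        proof (cases "i' + kappa r \<ge> B")
          case True
          then have "B - i' < Suc (kappa r)" by arith
          then have "bit ?m (i' + (B - i'))" using w unfolding win_def by blast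
          then have "bit ?m B" using False by simp
          then show False using bm[of B] bit_small[OF assms, of B] by simp
        next
          case F2: False
          have "win r i' (Suc (kappa r))"
            using w F2 unfolding win_def bm by auto
          then show False using not_win_Suc_kappa by blast
        qed
      qed
    qed
    ultimately have "kappa ?m = kappa r" by (rule kappa_eqI)
    then show ?thesis using True by (simp only: max_absorb2)
  next
    case False
    obtain i where i: "win n i (kappa n)" using kappa_win by blast
    have "win ?m (i + Suc B) (kappa n)"
      using i unfolding win_def bm by auto
    moreover have "\<not> win ?m i' (Suc (kappa n))" for i'
    proof
      assume w: "win ?m i' (Suc (kappa n))"
      show False
      proof (cases "i' \<ge> Suc B")
        case True
        have "win n (i' - Suc B) (Suc (kappa n))"
          using w True unfolding win_def bm by (auto simp: algebra_simps)
        then show False using not_win_Suc_kappa by blast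
      next
        case False
        show False
        proof (cases "i' + kappa n \<ge> B")
          case True
          then have "B - i' < Suc (kappa n)" by arith
          then have "bit ?m (i' + (B - i'))" using w unfolding win_def by blast
          then have "bit ?m B" using False by simp
          then show False using bm[of B] bit_small[OF assms, of B] by simp
        next
          case F2: False
          have "win r i' (Suc (kappa n))"
            using w F2 unfolding win_def bm by auto
          then have "Suc (kappa n) \<le> kappa r" by (rule kappa_max)
          then show False using \<open>\<not> kappa n \<le> kappa r\<close> by simp
        qed
      qed
    qed
    ultimately have "kappa ?m = kappa n" by (rule kappa_eqI)
    moreover have "max (kappa n) (kappa r) = kappa n" using False by simp
    ultimately show ?thesis by (simp only:)
  qed
qed



lemma bit_ones: "j < K \<Longrightarrow> bit (2 ^ K - 1 :: nat) j"
proof -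
  assume "j < K"
  then have "bit (mask K :: nat) j" by (simp add: bit_simps)
  then show ?thesis by (simp add: mask_eq_exp_minus_1)
qed

lemma bit_div2: "bit ((n::nat) div 2 ^ p) y = bit n (p + y)"
  using bit_drop_bit_eq[of p n] by (simp add: drop_bit_eq_div)

lemma bit_mod2: "bit ((n::nat) mod 2 ^ p) x = (x < p \<and> bit n x)"
  using bit_take_bit_iff[of p n x] by (simp add: take_bit_eq_mod)

lemma win_Suc: "win x i l \<Longrightarrow> bit x (i + l) \<Longrightarrow> win x i (Suc l)"
  unfolding win_def using less_Suc_eq by auto

lemma kappa_shift:
  assumes r: "r < 2 ^ A" and t: "\<not> bit n t" and k: "A + t \<le> kappa n"
  shows "kappa (2 ^ A * n + r) = kappa n"
proof -
  let ?m = "2 ^ A * n + r"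
  have bm: "bit ?m x = (if x < A then bit r x else bit n (x - A))" for x
    using bit_concat[OF r] .
  obtain i where i: "win n i (kappa n)" using kappa_win by blast
  have "win ?m (i + A) (kappa n)" using i unfolding win_def bm by auto
  moreover have "\<not> win ?m i' (Suc (kappa n))" for i'
  proof
    assume w: "win ?m i' (Suc (kappa n))"
    show False
    proof (cases "A \<le> i'")
      case True
      have "win n (i' - A) (Suc (kappa n))"
        using w True unfolding win_def bm by (auto simp: algebra_simps)
      then show False using not_win_Suc_kappa by blast
    next
      case False
      have "A + t - i' < Suc (kappa n)" using k by arith
      then have "bit ?m (i' + (A + t - i'))" using w unfolding win_def by blast
      then have "bit ?m (A + t)" using False by simp
      then show False using bm[of "A + t"] t by simp
    qed
  qed
  ultimately show ?thesis by (rule kappa_eqI)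
qed

definition ins :: "nat \<Rightarrow> nat \<Rightarrow> nat" where
  "ins p n = 2 ^ Suc p * (n div 2 ^ p) + (2 ^ p * 1 + n mod 2 ^ p)"

lemma bit_ins: "bit (ins p n) x = (if x < p then bit n x else if x = p then True else bit n (x - 1))"
proof -
  have b1: "n mod 2 ^ p < 2 ^ p" by simp
  have b2: "2 ^ p * 1 + n mod 2 ^ p < 2 ^ Suc p" using b1 by simp
  have inner: "bit (2 ^ p * 1 + n mod 2 ^ p) x = (if x < p then bit n x else x = p)" if "x < Suc p"
    using bit_concat[OF b1, of 1 x] that by (auto simp: bit_mod2 bit_0)
  show ?thesis unfolding ins_def bit_concat[OF b2] using inner
    by (auto simp: bit_div2)
qed

definition psi_start :: "nat \<Rightarrow> nat" where
  "psi_start n = (LEAST i. win n i (kappa n))"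

definition psi :: "nat \<Rightarrow> nat" where
  "psi n = ins (psi_start n + kappa n) n"

lemma psi_start_win: "win n (psi_start n) (kappa n)"
  unfolding psi_start_def using kappa_win by (rule LeastI_ex)

lemma psi_gap: "\<not> bit n (psi_start n + kappa n)"
proof
  assume "bit n (psi_start n + kappa n)"
  then have "win n (psi_start n) (Suc (kappa n))" using psi_start_win win_Suc by blast
  then show False using not_win_Suc_kappa by blast
qed

lemma bit_psi: "bit (psi n) x = (if x < psi_start n + kappa n then bit n x
   else if x = psi_start n + kappa n then True else bit n (x - 1))"
  unfolding psi_def bit_ins ..

lemma psi_win: "win (psi n) (psi_start n) (Suc (kappa n))"
  using psi_start_win unfolding win_def bit_psi by (auto simp: less_Suc_eq)

lemma psi_nowin: "\<not> win (psi n) i (Suc (Suc (kappa n)))"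
proof
  let ?p = "psi_start n + kappa n"
  assume w: "win (psi n) i (Suc (Suc (kappa n)))"
  show False
  proof (cases "i \<le> ?p")
    case True
    have "win n i (Suc (kappa n))"
      unfolding win_def
    proof (intro allI impI)
      fix j assume j: "j < Suc (kappa n)"
      show "bit n (i + j)"
      proof (cases "i + j < ?p")
        case True
        then show ?thesis using w j bit_psi[of n "i + j"] unfolding win_def by auto
      next
        case False
        have "bit (psi n) (i + Suc j)" using w j unfolding win_def by blast
        then show ?thesis using False bit_psi[of n "i + Suc j"] by auto
      qed
    qed
    then show False using not_win_Suc_kappa by blast
  next
    case False
    have "win n (i - 1) (Suc (kappa n))"
      unfolding win_def
    proof (intro allI impI)
      fix j assume j: "j < Suc (kappa n)"
      have "bit (psi n) (i + j)" using w j unfolding win_def by auto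
      then show "bit n (i - 1 + j)" using False bit_psi[of n "i + j"] by auto
    qed
    then show False using not_win_Suc_kappa by blast
  qed
qed

lemma kappa_psi: "kappa (psi n) = Suc (kappa n)"
  using psi_win psi_nowin by (rule kappa_eqI)

lemma psi_start_psi: "(LEAST i. win (psi n) i (kappa (psi n))) = psi_start n"
  unfolding kappa_psi
proof (rule Least_equality)
  show "win (psi n) (psi_start n) (Suc (kappa n))" by (rule psi_win)
next
  fix i assume w: "win (psi n) i (Suc (kappa n))"
  show "psi_start n \<le> i"
  proof (rule ccontr)
    assume "\<not> psi_start n \<le> i"
    then have "win n i (Suc (kappa n))"
      using w unfolding win_def bit_psi by auto
    then show False using not_win_Suc_kappa by blast
  qed
qed

lemma psi_inj: "inj psi"
proof (rule injI)
  fix n n' assume e: "psi n = psi n'"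
  have k: "kappa n = kappa n'" using arg_cong[OF e, of kappa] by (simp add: kappa_psi)
  have s: "psi_start n = psi_start n'" using psi_start_psi[of n] psi_start_psi[of n'] e by simp
  have "bit n x = bit n' x" for x
  proof -
    have "bit (psi n) (if x < psi_start n + kappa n then x else Suc x) = bit n x"
      unfolding bit_psi by auto
    moreover have "bit (psi n') (if x < psi_start n' + kappa n' then x else Suc x) = bit n' x"
      unfolding bit_psi by auto
    ultimately show ?thesis using e k s by simp
  qed
  then show "n = n'" by (simp add: bit_eq_iff)
qed

lemma psi_le: "psi n \<le> 4 * n + 1"
proof -
  let ?p = "psi_start n + kappa n"
  have "2 ^ ?p * (n div 2 ^ ?p) + n mod 2 ^ ?p = n" by simp
  moreover have "psi n = 2 * (2 ^ ?p * (n div 2 ^ ?p)) + n mod 2 ^ ?p + 2 ^ ?p"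
    unfolding psi_def ins_def by simp
  ultimately have a: "psi n \<le> 2 * n + 2 ^ ?p" by linarith
  have "2 ^ ?p \<le> 2 * n + 1"
  proof (cases "kappa n")
    case 0
    have "psi_start n = 0" unfolding psi_start_def 0 by (simp add: win_def)
    then show ?thesis using 0 by simp
  next
    case (Suc k)
    have "bit n (psi_start n + k)" using psi_start_win Suc unfolding win_def by auto
    then have "2 ^ (psi_start n + k) \<le> n" by (rule bit_le)
    then show ?thesis using Suc by simp
  qed
  then show ?thesis using a by simp
qed



definition cnt :: "nat set \<Rightarrow> nat \<Rightarrow> nat" where
  "cnt A N = card (A \<inter> {..<N})"

definition evle :: "nat set \<Rightarrow> real \<Rightarrow> bool" where
  "evle A e \<longleftrightarrow> (\<exists>N0. \<forall>N\<ge>N0. real (cnt A N) \<le> e * real N)"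

definition dz :: "nat set \<Rightarrow> bool" where
  "dz A \<longleftrightarrow> (\<forall>e>0. evle A e)"

lemma cnt_le: "cnt A N \<le> N"
proof -
  have "card (A \<inter> {..<N}) \<le> card {..<N}" by (rule card_mono) auto
  then show ?thesis unfolding cnt_def by simp
qed

lemma dz_real: "dz A \<longleftrightarrow> (\<forall>e>0. eventually (\<lambda>N. real (cnt A N) / real N < e) sequentially)"
proof
  assume d: "dz A"
  show "\<forall>e>0. eventually (\<lambda>N. real (cnt A N) / real N < e) sequentially"
  proof (intro allI impI)
    fix e :: real assume "e > 0"
    then obtain N0 where N0: "\<And>N. N \<ge> N0 \<Longrightarrow> real (cnt A N) \<le> e / 2 * real N"
      using d unfolding dz_def evle_def by (meson half_gt_zero)
    show "eventually (\<lambda>N. real (cnt A N) / real N < e) sequentially"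
      unfolding eventually_sequentially
    proof (intro exI[of _ "Suc N0"] allI impI)
      fix N assume "Suc N0 \<le> N"
      then have "real N > 0" by simp
      have "real (cnt A N) / real N \<le> e / 2"
        using N0[of N] \<open>Suc N0 \<le> N\<close> \<open>real N > 0\<close> by (simp add: divide_le_eq)
      then show "real (cnt A N) / real N < e" using \<open>e > 0\<close> by linarith
    qed
  qed
next
  assume r: "\<forall>e>0. eventually (\<lambda>N. real (cnt A N) / real N < e) sequentially"
  show "dz A" unfolding dz_def evle_def
  proof (intro allI impI)
    fix e :: real assume "e > 0"
    then obtain N0 where N0: "\<And>N. N \<ge> N0 \<Longrightarrow> real (cnt A N) / real N < e"
      using r unfolding eventually_sequentially by blast
    show "\<exists>N0. \<forall>N\<ge>N0. real (cnt A N) \<le> e * real N"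
    proof (intro exI[of _ "Suc N0"] allI impI)
      fix N assume "Suc N0 \<le> N"
      then have "real N > 0" by simp
      then show "real (cnt A N) \<le> e * real N"
        using N0[of N] \<open>Suc N0 \<le> N\<close> by (simp add: divide_less_eq)
    qed
  qed
qed

lemma udz_iff: "upper_density_zero A \<longleftrightarrow> dz A"
proof -
  define x where "x N = real (cnt A N) / real N" for N
  have ge: "0 \<le> limsup (\<lambda>N. ereal (x N))"
    by (rule le_Limsup) (auto simp: x_def)
  have "upper_density_zero A \<longleftrightarrow> limsup (\<lambda>N. ereal (x N)) = 0"
    unfolding upper_density_zero_def x_def cnt_def ..
  also have "\<dots> \<longleftrightarrow> 0 \<ge> limsup (\<lambda>N. ereal (x N))" using ge by auto
  also have "\<dots> \<longleftrightarrow> (\<forall>y>0. eventually (\<lambda>N. y > ereal (x N)) sequentially)"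
    by (rule Limsup_le_iff)
  also have "\<dots> \<longleftrightarrow> (\<forall>e>0. eventually (\<lambda>N. x N < e) sequentially)"
  proof
    assume a: "\<forall>y>0. eventually (\<lambda>N. y > ereal (x N)) sequentially"
    show "\<forall>e>0. eventually (\<lambda>N. x N < e) sequentially"
    proof (intro allI impI)
      fix e :: real assume "e > 0"
      then have "ereal e > 0" by simp
      then have "eventually (\<lambda>N. ereal e > ereal (x N)) sequentially" using a by blast
      then show "eventually (\<lambda>N. x N < e) sequentially" by simp
    qed
  next
    assume a: "\<forall>e>0. eventually (\<lambda>N. x N < e) sequentially"
    show "\<forall>y>0. eventually (\<lambda>N. y > ereal (x N)) sequentially"
    proof (intro allI impI)
      fix y :: ereal assume "y > 0"
      show "eventually (\<lambda>N. y > ereal (x N)) sequentially"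
      proof (cases y)
        case (real e)
        then have "e > 0" using \<open>y > 0\<close> by simp
        then show ?thesis using a real by simp
      next
        case PInf
        have "eventually (\<lambda>N. x N < 1) sequentially" using a by simp
        then show ?thesis using PInf by (simp add: eventually_mono)
      next
        case MInf
        then show ?thesis using \<open>y > 0\<close> by simp
      qed
    qed
  qed
  also have "\<dots> \<longleftrightarrow> dz A" unfolding dz_real x_def ..
  finally show ?thesis .
qed

lemma asymp_eq_dz: "asymp_eq f g \<longleftrightarrow> dz {n. f n \<noteq> g n}"
  unfolding asymp_eq_def almost_all_def udz_iff by simp

lemma cnt_mono: "A \<subseteq> B \<Longrightarrow> cnt A N \<le> cnt B N"
  unfolding cnt_def by (intro card_mono) auto

lemma cnt_Un: "cnt (A \<union> B) N \<le> cnt A N + cnt B N"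
  unfolding cnt_def by (metis Int_Un_distrib2 card_Un_le)

lemma evle_mono: "A \<subseteq> B \<Longrightarrow> evle B e \<Longrightarrow> evle A e"
proof -
  assume "A \<subseteq> B" "evle B e"
  then obtain N0 where N0: "\<And>N. N \<ge> N0 \<Longrightarrow> real (cnt B N) \<le> e * real N"
    unfolding evle_def by blast
  show ?thesis unfolding evle_def
  proof (intro exI[of _ N0] allI impI)
    fix N assume "N0 \<le> N"
    have "cnt A N \<le> cnt B N" using \<open>A \<subseteq> B\<close> by (rule cnt_mono)
    then have "real (cnt A N) \<le> real (cnt B N)" by simp
    then show "real (cnt A N) \<le> e * real N" using N0[OF \<open>N0 \<le> N\<close>] by linarith
  qed
qed

lemma evle_Un: "evle A e1 \<Longrightarrow> evle B e2 \<Longrightarrow> evle (A \<union> B) (e1 + e2)"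
proof -
  assume "evle A e1" "evle B e2"
  then obtain N1 N2 where N1: "\<And>N. N \<ge> N1 \<Longrightarrow> real (cnt A N) \<le> e1 * real N"
     and N2: "\<And>N. N \<ge> N2 \<Longrightarrow> real (cnt B N) \<le> e2 * real N"
    unfolding evle_def by blast
  show ?thesis unfolding evle_def
  proof (intro exI[of _ "max N1 N2"] allI impI)
    fix N assume "max N1 N2 \<le> N"
    then have "real (cnt A N) + real (cnt B N) \<le> (e1 + e2) * real N"
      using N1[of N] N2[of N] by (simp add: algebra_simps)
    moreover have "real (cnt (A \<union> B) N) \<le> real (cnt A N) + real (cnt B N)"
      using cnt_Un[of A B N] by linarith
    ultimately show "real (cnt (A \<union> B) N) \<le> (e1 + e2) * real N" by linarith
  qed
qed

lemma dz_mono: "A \<subseteq> B \<Longrightarrow> dz B \<Longrightarrow> dz A"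
  unfolding dz_def using evle_mono by blast

lemma dz_Un: "dz A \<Longrightarrow> dz B \<Longrightarrow> dz (A \<union> B)"
  unfolding dz_def
proof (intro allI impI)
  fix e :: real assume "\<forall>e>0. evle A e" "\<forall>e>0. evle B e" "e > 0"
  then have "evle A (e/2)" "evle B (e/2)" by auto
  then have "evle (A \<union> B) (e/2 + e/2)" by (rule evle_Un)
  then show "evle (A \<union> B) e" by simp
qed

lemma dz_empty: "dz {}"
  unfolding dz_def evle_def cnt_def by simp

lemma dz_finite_UN: "finite I \<Longrightarrow> (\<And>i. i \<in> I \<Longrightarrow> dz (S i)) \<Longrightarrow> dz (\<Union>i\<in>I. S i)"
proof (induction I rule: finite_induct)
  case empty
  then show ?case using dz_empty by simp
next
  case (insert x F)
  then show ?case using dz_Un by simp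
qed

lemma not_dz_UNIV: "\<not> dz UNIV"
proof
  assume "dz UNIV"
  then obtain N0 where N0: "\<And>N. N \<ge> N0 \<Longrightarrow> real (cnt UNIV N) \<le> 1/2 * real N"
    unfolding dz_def evle_def by (meson half_gt_zero zero_less_one)
  have "cnt UNIV (Suc N0) = Suc N0" unfolding cnt_def by simp
  then show False using N0[of "Suc N0"] by simp
qed

lemma dz_preimage:
  assumes "inj \<phi>" "\<And>n. \<phi> n \<le> c * n + d" "c \<ge> 1" "dz A"
  shows "dz (\<phi> -` A)"
  unfolding dz_def
proof (intro allI impI)
  fix e :: real assume "e > 0"
  define e' where "e' = e / real (c + d)"
  have cd: "real (c + d) > 0" using assms(3) by simp
  then have "e' > 0" using \<open>e > 0\<close> unfolding e'_def by simp
  then obtain N0 where N0: "\<And>N. N \<ge> N0 \<Longrightarrow> real (cnt A N) \<le> e' * real N"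
    using assms(4) unfolding dz_def evle_def by blast
  show "evle (\<phi> -` A) e" unfolding evle_def
  proof (intro exI[of _ "Suc N0"] allI impI)
    fix N assume N: "Suc N0 \<le> N"
    have sub: "\<phi> ` (\<phi> -` A \<inter> {..<N}) \<subseteq> A \<inter> {..<c * N + d}"
    proof
      fix m assume "m \<in> \<phi> ` (\<phi> -` A \<inter> {..<N})"
      then obtain n where n: "n < N" "\<phi> n \<in> A" "m = \<phi> n" by auto
      have "c * n + d < c * N + d" using n(1) assms(3) by simp
      then have "\<phi> n < c * N + d" using assms(2)[of n] by linarith
      then show "m \<in> A \<inter> {..<c * N + d}" using n assms(2)[of n] by simp
    qed
    have "cnt (\<phi> -` A) N = card (\<phi> ` (\<phi> -` A \<inter> {..<N}))"
      unfolding cnt_def using assms(1) by (simp add: card_image inj_on_subset)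
    also have "\<dots> \<le> cnt A (c * N + d)"
      unfolding cnt_def using sub by (intro card_mono) auto
    finally have "real (cnt (\<phi> -` A) N) \<le> real (cnt A (c * N + d))" by simp
    also have "\<dots> \<le> e' * real (c * N + d)"
    proof -
      have "N \<le> c * N" using assms(3) by simp
      then have "N0 \<le> c * N + d" using N by linarith
      then show ?thesis by (rule N0)
    qed
    also have "real (c * N + d) \<le> real (c + d) * real N"
    proof -
      have "d \<le> d * N" using N by simp
      then have "c * N + d \<le> (c + d) * N" by (simp add: algebra_simps)
      then have "real (c * N + d) \<le> real ((c + d) * N)" by (rule of_nat_mono)
      then show ?thesis by simp
    qed
    then have "e' * real (c * N + d) \<le> e' * (real (c + d) * real N)"
      using \<open>e' > 0\<close> by simp
    also have "\<dots> = e * real N" unfolding e'_def using cd by simp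
    finally show "real (cnt (\<phi> -` A) N) \<le> e * real N" .
  qed
qed



lemma evle_weaken: "evle A e1 \<Longrightarrow> e1 \<le> e2 \<Longrightarrow> evle A e2"
proof -
  assume "evle A e1" "e1 \<le> e2"
  then obtain N0 where N0: "\<And>N. N \<ge> N0 \<Longrightarrow> real (cnt A N) \<le> e1 * real N"
    unfolding evle_def by blast
  show ?thesis unfolding evle_def
  proof (intro exI[of _ N0] allI impI)
    fix N assume "N0 \<le> N"
    have "e1 * real N \<le> e2 * real N" using \<open>e1 \<le> e2\<close> by (simp add: mult_right_mono)
    then show "real (cnt A N) \<le> e2 * real N" using N0[OF \<open>N0 \<le> N\<close>] by linarith
  qed
qed

lemma cnt_periodic:
  assumes P: "P > 0" and A: "A \<subseteq> {n. n mod P \<in> R}" and R: "finite R"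
  shows "cnt A N \<le> (N div P + 1) * card R"
proof -
  have "A \<inter> {..<N} \<subseteq> (\<lambda>(q, r). q * P + r) ` ({..N div P} \<times> R)"
  proof
    fix n assume n: "n \<in> A \<inter> {..<N}"
    have "n div P \<le> N div P" using n by (simp add: div_le_mono)
    moreover have "n mod P \<in> R" using n A by auto
    moreover have "n = n div P * P + n mod P" by simp
    ultimately show "n \<in> (\<lambda>(q, r). q * P + r) ` ({..N div P} \<times> R)"
      by (intro image_eqI[of _ _ "(n div P, n mod P)"]) auto
  qed
  then have "cnt A N \<le> card ((\<lambda>(q, r). q * P + r) ` ({..N div P} \<times> R))"
    unfolding cnt_def using R by (intro card_mono) auto
  also have "\<dots> \<le> card ({..N div P} \<times> R)" by (rule card_image_le) (use R in auto)
  also have "\<dots> = (N div P + 1) * card R" by (simp add: card_cartesian_product)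
  finally show ?thesis .
qed

lemma evle_periodic:
  assumes P: "P > 0" and A: "A \<subseteq> {n. n mod P \<in> R}" and R: "finite R" and d: "d > 0"
  shows "evle A (real (card R) / real P + d)"
  unfolding evle_def
proof (intro exI[of _ "nat \<lceil>real (card R) / d\<rceil>"] allI impI)
  fix N assume N: "nat \<lceil>real (card R) / d\<rceil> \<le> N"
  have "real (card R) / d \<le> real N" using N by linarith
  then have c1: "real (card R) \<le> d * real N" using d by (simp add: divide_le_eq mult.commute)
  have "N div P * P \<le> N" by simp
  then have "real (N div P) * real P \<le> real N" by (metis of_nat_le_iff of_nat_mult)
  then have "real (N div P) \<le> real N / real P" using P by (simp add: pos_le_divide_eq)
  then have "real (N div P) * real (card R) \<le> real N / real P * real (card R)"
    by (rule mult_right_mono) simp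
  moreover have "real (cnt A N) \<le> real (N div P) * real (card R) + real (card R)"
    using cnt_periodic[OF P A R, of N] by (simp add: algebra_simps flip: of_nat_mult of_nat_add)
  ultimately have "real (cnt A N) \<le> real N / real P * real (card R) + d * real N"
    using c1 by linarith
  also have "\<dots> = (real (card R) / real P + d) * real N" by (simp add: algebra_simps)
  finally show "real (cnt A N) \<le> (real (card R) / real P + d) * real N" .
qed

lemma trailing_sub: "{n::nat. \<forall>t<j. bit n t} \<subseteq> {n. n mod 2 ^ j \<in> {2 ^ j - 1}}"
proof
  fix n :: nat assume "n \<in> {n. \<forall>t<j. bit n t}"
  then have h: "\<forall>t<j. bit n t" by simp
  have "bit (n mod 2 ^ j) x = bit (2 ^ j - 1 :: nat) x" for x
  proof (cases "x < j")
    case True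
    then show ?thesis using h bit_ones[of x j] by (simp add: bit_mod2)
  next
    case False
    have "(2::nat) ^ j - 1 < 2 ^ j" by simp
    then show ?thesis using False bit_small[of "2 ^ j - 1" j x] by (simp add: bit_mod2)
  qed
  then have "n mod 2 ^ j = 2 ^ j - 1" by (simp add: bit_eq_iff)
  then show "n \<in> {n. n mod 2 ^ j \<in> {2 ^ j - 1}}" by simp
qed

lemma evle_trailing: "d > 0 \<Longrightarrow> evle {n::nat. \<forall>t<j. bit n t} (1 / 2 ^ j + d)"
proof -
  assume d: "d > 0"
  have "evle {n::nat. \<forall>t<j. bit n t} (real (card {2 ^ j - 1 :: nat}) / real (2 ^ j :: nat) + d)"
    by (rule evle_periodic[OF _ trailing_sub]) (use d in auto)
  then show ?thesis by simp
qed

definition Rset :: "nat \<Rightarrow> nat \<Rightarrow> nat set" where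
  "Rset K q = {x. x < 2 ^ (K * q) \<and> (\<forall>i<q. \<not> win x (K * i) K)}"

lemma Rset_finite: "finite (Rset K q)"
  unfolding Rset_def by (rule finite_subset[of _ "{..<2 ^ (K * q)}"]) auto

lemma win_of_mask: "(x::nat) mod 2 ^ K = 2 ^ K - 1 \<Longrightarrow> win x 0 K"
  unfolding win_def
proof (intro allI impI)
  fix j assume "x mod 2 ^ K = 2 ^ K - 1" "j < K"
  then have "bit (x mod 2 ^ K) j" using bit_ones by simp
  then show "bit x (0 + j)" by (simp add: bit_mod2)
qed

lemma Rset_card: "card (Rset K q) \<le> (2 ^ K - 1) ^ q"
proof (induction q)
  case 0
  have "Rset K 0 \<subseteq> {0}" unfolding Rset_def by auto
  then have "card (Rset K 0) \<le> card {0::nat}" by (intro card_mono) auto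
  then show ?case by simp
next
  case (Suc q)
  let ?D = "{..<2 ^ K} - {2 ^ K - 1 :: nat}"
  have sub: "Rset K (Suc q) \<subseteq> (\<lambda>(a, b). 2 ^ K * b + a) ` (?D \<times> Rset K q)"
  proof
    fix x assume x: "x \<in> Rset K (Suc q)"
    then have x1: "x < 2 ^ (K * Suc q)" and x2: "\<And>i. i < Suc q \<Longrightarrow> \<not> win x (K * i) K"
      unfolding Rset_def by auto
    have a: "x mod 2 ^ K \<in> ?D"
    proof -
      have "x mod 2 ^ K \<noteq> 2 ^ K - 1" using x2[of 0] win_of_mask by auto
      then show ?thesis by simp
    qed
    have b1: "x div 2 ^ K < 2 ^ (K * q)"
      using x1 by (simp add: div_less_iff_less_mult power_add mult.commute power_mult)
    have b2: "\<not> win (x div 2 ^ K) (K * i) K" if "i < q" for i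
    proof
      assume "win (x div 2 ^ K) (K * i) K"
      then have "win x (K * Suc i) K" unfolding win_def bit_div2 by (simp add: algebra_simps)
      then show False using x2[of "Suc i"] that by simp
    qed
    have "x div 2 ^ K \<in> Rset K q" unfolding Rset_def using b1 b2 by auto
    moreover have "x = 2 ^ K * (x div 2 ^ K) + x mod 2 ^ K" by simp
    ultimately show "x \<in> (\<lambda>(a, b). 2 ^ K * b + a) ` (?D \<times> Rset K q)"
      using a by (intro image_eqI[of _ _ "(x mod 2 ^ K, x div 2 ^ K)"]) auto
  qed
  have "card (Rset K (Suc q)) \<le> card ((\<lambda>(a, b). 2 ^ K * b + a) ` (?D \<times> Rset K q))"
    using sub by (intro card_mono) (auto intro: Rset_finite)
  also have "\<dots> \<le> card (?D \<times> Rset K q)" by (rule card_image_le) (auto intro: Rset_finite)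
  also have "\<dots> = card ?D * card (Rset K q)" by (simp add: card_cartesian_product)
  also have "card ?D = 2 ^ K - 1" by simp
  also have "(2 ^ K - 1) * card (Rset K q) \<le> (2 ^ K - 1) * (2 ^ K - 1) ^ q"
    using Suc.IH by simp
  finally show ?case by simp
qed

lemma lowkappa_sub: "{n. kappa n < K} \<subseteq> {n. n mod 2 ^ (K * q) \<in> Rset K q}"
proof
  fix n assume "n \<in> {n. kappa n < K}"
  then have k: "kappa n < K" by simp
  have "\<not> win (n mod 2 ^ (K * q)) (K * i) K" if "i < q" for i
  proof
    assume w: "win (n mod 2 ^ (K * q)) (K * i) K"
    have "win n (K * i) K" unfolding win_def
    proof (intro allI impI)
      fix j assume j: "j < K"
      have "K * i + j < K * q"
      proof -
        have "K * i + j < K * (i + 1)" using j by simp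
        also have "\<dots> \<le> K * q" using that by (intro mult_le_mono2) simp
        finally show ?thesis .
      qed
      then show "bit n (K * i + j)" using w j unfolding win_def bit_mod2 by auto
    qed
    then have "K \<le> kappa n" by (rule kappa_max)
    then show False using k by simp
  qed
  then show "n \<in> {n. n mod 2 ^ (K * q) \<in> Rset K q}" unfolding Rset_def by simp
qed

lemma dz_lowkappa: "dz {n. kappa n < K}"
  unfolding dz_def
proof (intro allI impI)
  fix e :: real assume e: "e > 0"
  define x :: real where "x = (2 ^ K - 1) / 2 ^ K"
  have x0: "0 \<le> x" and x1: "x < 1" unfolding x_def by auto
  have "(\<lambda>n. x ^ n) \<longlonglongrightarrow> 0" by (rule LIMSEQ_power_zero) (use x0 x1 in simp)
  then obtain q where q: "norm (x ^ q - 0) < e / 2"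
    using LIMSEQ_D[of "\<lambda>n. x ^ n" 0 "e/2"] e by auto
  have xq: "x ^ q < e / 2" using q x0 by simp
  have "evle {n. kappa n < K} (real (card (Rset K q)) / real (2 ^ (K * q) :: nat) + e / 2)"
    by (rule evle_periodic[OF _ lowkappa_sub Rset_finite]) (use e in auto)
  moreover have "real (card (Rset K q)) / real (2 ^ (K * q) :: nat) \<le> x ^ q"
  proof -
    have "real (card (Rset K q)) \<le> real ((2 ^ K - 1) ^ q)" using Rset_card of_nat_mono by blast
    also have "\<dots> = (2 ^ K - 1) ^ q" by (simp add: of_nat_diff)
    finally have "real (card (Rset K q)) / real (2 ^ (K * q) :: nat) \<le> (2 ^ K - 1) ^ q / 2 ^ (K * q)"
      by (simp add: divide_right_mono)
    also have "\<dots> = x ^ q" unfolding x_def by (simp add: power_divide power_mult)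
    finally show ?thesis .
  qed
  ultimately show "evle {n. kappa n < K} e" using xq by (elim evle_weaken) linarith
qed



lemma shift_ae:
  assumes r: "r < 2 ^ A"
  shows "dz {n. kappa_parity (2 ^ A * n + r) \<noteq> kappa_parity n}"
  unfolding dz_def
proof (intro allI impI)
  fix e :: real assume e: "e > 0"
  obtain j :: nat where j: "4 / e < real j" using reals_Archimedean2 by blast
  have "real j < 2 ^ j" by (metis of_nat_less_iff less_exp of_nat_numeral of_nat_power)
  then have "4 / e < 2 ^ j" using j by linarith
  then have "4 < e * 2 ^ j" using e by (simp add: divide_less_eq mult.commute)
  then have j': "1 / 2 ^ j \<le> e / 4" using e by (simp add: divide_le_eq field_simps)
  let ?T = "{n::nat. \<forall>t<j. bit n t}" and ?L = "{n. kappa n < A + j}"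
  have sub: "{n. kappa_parity (2 ^ A * n + r) \<noteq> kappa_parity n} \<subseteq> ?T \<union> ?L"
  proof
    fix n assume n: "n \<in> {n. kappa_parity (2 ^ A * n + r) \<noteq> kappa_parity n}"
    show "n \<in> ?T \<union> ?L"
    proof (rule ccontr)
      assume "n \<notin> ?T \<union> ?L"
      then obtain t where t: "t < j" "\<not> bit n t" and k: "A + j \<le> kappa n" by auto
      have "kappa (2 ^ A * n + r) = kappa n"
        by (rule kappa_shift[OF r t(2)]) (use t k in linarith)
      then show False using n unfolding kappa_parity_def by simp
    qed
  qed
  have "evle ?T (1 / 2 ^ j + e / 4)" by (rule evle_trailing) (use e in simp)
  then have "evle ?T (e / 2)" by (rule evle_weaken) (use j' in linarith)
  moreover have "evle ?L (e / 2)" using dz_lowkappa[of "A + j"] e unfolding dz_def by simp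
  ultimately have "evle (?T \<union> ?L) (e / 2 + e / 2)" by (rule evle_Un)
  then have "evle (?T \<union> ?L) e" by simp
  then show "evle {n. kappa_parity (2 ^ A * n + r) \<noteq> kappa_parity n} e"
    using sub by (rule evle_mono[rotated])
qed

lemma asymp_eq_sym: "asymp_eq f g \<Longrightarrow> asymp_eq g f"
  unfolding asymp_eq_dz by (simp add: eq_commute)

lemma asymp_eq_trans: "asymp_eq f g \<Longrightarrow> asymp_eq g h \<Longrightarrow> asymp_eq f h"
  unfolding asymp_eq_dz
proof -
  assume "dz {n. f n \<noteq> g n}" "dz {n. g n \<noteq> h n}"
  then have "dz ({n. f n \<noteq> g n} \<union> {n. g n \<noteq> h n})" by (rule dz_Un)
  then show "dz {n. f n \<noteq> h n}" by (rule dz_mono[rotated]) auto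
qed

lemma kernel_kp: "h \<in> kernel 2 kappa_parity \<Longrightarrow> asymp_eq h kappa_parity"
  unfolding kernel_def asymp_eq_dz using shift_ae by auto

theorem part1: "asymp_automatic 2 kappa_parity"
proof -
  let ?R = "{(g, h). asymp_eq g h} :: ((nat \<Rightarrow> nat) \<times> (nat \<Rightarrow> nat)) set"
  have "kernel 2 kappa_parity // ?R \<subseteq> {?R `` {kappa_parity}}"
  proof
    fix X assume "X \<in> kernel 2 kappa_parity // ?R"
    then obtain x where x: "x \<in> kernel 2 kappa_parity" "X = ?R `` {x}"
      unfolding quotient_def by blast
    have xk: "asymp_eq x kappa_parity" using x(1) by (rule kernel_kp)
    have "?R `` {x} = ?R `` {kappa_parity}"
    proof (intro set_eqI iffI)
      fix y assume "y \<in> ?R `` {x}"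
      then have "asymp_eq x y" by simp
      then have "asymp_eq kappa_parity y" using asymp_eq_sym[OF xk] asymp_eq_trans by blast
      then show "y \<in> ?R `` {kappa_parity}" by simp
    next
      fix y assume "y \<in> ?R `` {kappa_parity}"
      then have "asymp_eq kappa_parity y" by simp
      then have "asymp_eq x y" using xk asymp_eq_trans by blast
      then show "y \<in> ?R `` {x}" by simp
    qed
    then show "X \<in> {?R `` {kappa_parity}}" using x by simp
  qed
  then have "finite (kernel 2 kappa_parity // ?R)" by (rule finite_subset) simp
  then show ?thesis unfolding asymp_automatic_def .
qed

lemma not_dz_odd: "\<not> dz {n. odd (kappa n)}" and not_dz_even: "\<not> dz {n. even (kappa n)}"
proof -
  have p: "dz (psi -` A)" if "dz A" for A
    by (rule dz_preimage[OF psi_inj psi_le _ that]) simp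
  have u: "UNIV = {n. odd (kappa n)} \<union> {n. even (kappa n)}" by auto
  show "\<not> dz {n. odd (kappa n)}"
  proof
    assume d: "dz {n. odd (kappa n)}"
    have "{n. even (kappa n)} \<subseteq> psi -` {n. odd (kappa n)}" by (auto simp: kappa_psi)
    then have "dz {n. even (kappa n)}" using p[OF d] by (rule dz_mono)
    then have "dz UNIV" using d u dz_Un by metis
    then show False using not_dz_UNIV by blast
  qed
  show "\<not> dz {n. even (kappa n)}"
  proof
    assume d: "dz {n. even (kappa n)}"
    have "{n. odd (kappa n)} \<subseteq> psi -` {n. even (kappa n)}" by (auto simp: kappa_psi)
    then have "dz {n. odd (kappa n)}" using p[OF d] by (rule dz_mono)
    then have "dz UNIV" using d u dz_Un by metis
    then show False using not_dz_UNIV by blast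
  qed
qed

lemma concat_inj:
  assumes "r < 2 ^ A" "r' < 2 ^ A" "2 ^ A * a + r = 2 ^ A * a' + (r' :: nat)"
  shows "a = a' \<and> r = r'"
proof -
  have "(2 ^ A * a + r) div 2 ^ A = a" "(2 ^ A * a + r) mod 2 ^ A = r" using assms(1) by simp_all
  moreover have "(2 ^ A * a' + r') div 2 ^ A = a'" "(2 ^ A * a' + r') mod 2 ^ A = r'" using assms(2) by simp_all
  ultimately show ?thesis using assms(3) by metis
qed

theorem part2:
  "\<not> (\<exists>g :: nat \<Rightarrow> nat. (\<forall>n. g n \<in> {0, 1}) \<and> automatic 2 g \<and> asymp_eq kappa_parity g)"
proof
  assume "\<exists>g :: nat \<Rightarrow> nat. (\<forall>n. g n \<in> {0, 1}) \<and> automatic 2 g \<and> asymp_eq kappa_parity g"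
  then obtain g :: "nat \<Rightarrow> nat" where aut: "automatic 2 g" and ae: "asymp_eq kappa_parity g" by blast
  let ?f = kappa_parity
  define E where "E = {m. ?f m \<noteq> g m}"
  have dE: "dz E" using ae unfolding asymp_eq_dz E_def .
  define K where "K = kernel 2 g"
  have fK: "finite K" using aut unfolding automatic_def K_def .
  have hK: "dz {n. h n \<noteq> ?f n}" if hin: "h \<in> K" for h
  proof -
    obtain a r where h: "h = (\<lambda>n. g (2 ^ a * n + r))" and r: "r < 2 ^ a"
      using hin unfolding K_def kernel_def by blast
    have inj: "inj (\<lambda>n::nat. 2 ^ a * n + r)" by (rule injI) simp
    have "dz ((\<lambda>n::nat. 2 ^ a * n + r) -` E)"
      by (rule dz_preimage[OF inj _ _ dE, of "2 ^ a" r]) simp_all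
    moreover have "dz {n. ?f (2 ^ a * n + r) \<noteq> ?f n}" using shift_ae[OF r] .
    ultimately have "dz ((\<lambda>n::nat. 2 ^ a * n + r) -` E \<union> {n. ?f (2 ^ a * n + r) \<noteq> ?f n})"
      by (rule dz_Un)
    then show ?thesis by (rule dz_mono[rotated]) (auto simp: h E_def)
  qed
  define E' where "E' = (\<Union>h\<in>K. {n. h n \<noteq> ?f n})"
  have dE': "dz E'" unfolding E'_def using fK hK by (rule dz_finite_UN)
  have good: "g (2 ^ a * n + r) = ?f n" if "n \<notin> E'" "r < 2 ^ a" for n a r
  proof -
    have "(\<lambda>n. g (2 ^ a * n + r)) \<in> K" unfolding K_def kernel_def using that(2) by blast
    then show ?thesis using that(1) unfolding E'_def by blast
  qed
  obtain n0 where n0: "n0 \<notin> E'" "even (kappa n0)"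
  proof -
    have "\<not> {n. even (kappa n)} \<subseteq> E'" using not_dz_even dE' dz_mono by blast
    then show ?thesis using that by blast
  qed
  obtain n1 where n1: "n1 \<notin> E'" "odd (kappa n1)"
  proof -
    have "\<not> {n. odd (kappa n)} \<subseteq> E'" using not_dz_odd dE' dz_mono by blast
    then show ?thesis using that by blast
  qed
  have f0: "?f n0 = 0" and f1: "?f n1 = 1" using n0 n1 unfolding kappa_parity_def by auto
  then have n01: "n0 \<noteq> n1" by auto
  define K0 where "K0 = max (kappa n0) (kappa n1)"
  define C :: nat where "C = 2 ^ Suc K0 * (n0 + n1 + 1)"
  have C0: "C > 0" unfolding C_def by simp
  have "1 / (2 * real C) > 0" using C0 by simp
  then obtain N0 where N0: "\<And>N. N \<ge> N0 \<Longrightarrow> real (cnt E N) \<le> 1 / (2 * real C) * real N"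
    using dE unfolding dz_def evle_def by blast
  define b where "b = N0"
  define A where "A = Suc (b + K0)"
  define rr where "rr s = 2 ^ K0 * s + (2 ^ K0 - 1)" for s :: nat
  define m where "m n s = 2 ^ A * n + rr s" for n s
  have rr_lt: "rr s < 2 ^ (b + K0)" if "s < 2 ^ b" for s
  proof -
    have "(0::nat) < 2 ^ K0" by simp
    then have "rr s < 2 ^ K0 * (s + 1)" unfolding rr_def by (simp add: algebra_simps)
    also have "\<dots> \<le> 2 ^ K0 * 2 ^ b" using that by (intro mult_le_mono2) simp
    finally show ?thesis by (simp add: power_add mult.commute)
  qed
  have rr_lt2: "rr s < 2 ^ A" if "s < 2 ^ b" for s
  proof -
    have "(2::nat) ^ (b + K0) < 2 ^ A" unfolding A_def by simp
    then show ?thesis using rr_lt[OF that] by linarith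
  qed
  have rr_k: "K0 \<le> kappa (rr s)" for s
  proof -
    have m1: "(2::nat) ^ K0 - 1 < 2 ^ K0" by simp
    have "win (rr s) 0 K0" unfolding win_def rr_def bit_concat[OF m1]
      using bit_ones by simp
    then show ?thesis by (rule kappa_max)
  qed
  have km: "kappa (m n s) = kappa (rr s)" if "s < 2 ^ b" "kappa n \<le> K0" for n s
  proof -
    have "kappa (m n s) = max (kappa n) (kappa (rr s))"
      unfolding m_def A_def by (rule kappa_sep[OF rr_lt[OF that(1)]])
    then show ?thesis using rr_k[of s] that(2) by simp
  qed
  have inE: "m n0 s \<in> E \<or> m n1 s \<in> E" if "s < 2 ^ b" for s
  proof (rule ccontr)
    assume "\<not> (m n0 s \<in> E \<or> m n1 s \<in> E)"
    then have "?f (m n0 s) = g (m n0 s)" "?f (m n1 s) = g (m n1 s)" unfolding E_def by auto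
    moreover have "g (m n0 s) = 0" "g (m n1 s) = 1"
      unfolding m_def using good[OF n0(1) rr_lt2[OF that]] good[OF n1(1) rr_lt2[OF that]] f0 f1
      by auto
    moreover have "?f (m n0 s) = ?f (m n1 s)"
      unfolding kappa_parity_def using km[OF that, of n0] km[OF that, of n1] K0_def by simp
    ultimately show False by simp
  qed
  define ch where "ch s = (if m n0 s \<in> E then m n0 s else m n1 s)" for s
  define N where "N = 2 ^ A * (n0 + n1 + 1)"
  have rr_inj: "rr s = rr s' \<Longrightarrow> s = s'" for s s'
  proof -
    assume "rr s = rr s'"
    then have "2 ^ K0 * s = (2 :: nat) ^ K0 * s'" unfolding rr_def by (simp only: add_right_cancel)
    then show "s = s'" by simp
  qed
  have inj: "inj_on ch {..<2 ^ b}"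
  proof (rule inj_onI)
    fix s s' assume s: "s \<in> {..<2 ^ b}" and s': "s' \<in> {..<2 ^ b}" and e: "ch s = ch s'"
    have l1: "rr s < 2 ^ A" "rr s' < 2 ^ A" using s s' rr_lt2 by auto
    have "\<exists>i i'. i \<in> {n0, n1} \<and> i' \<in> {n0, n1} \<and> m i s = m i' s'"
      using e unfolding ch_def by (auto split: if_splits)
    then obtain i i' where "m i s = m i' s'" by blast
    then have "rr s = rr s'" using concat_inj[OF l1] unfolding m_def by blast
    then show "s = s'" by (rule rr_inj)
  qed
  have img: "ch ` {..<2 ^ b} \<subseteq> E \<inter> {..<N}"
  proof
    fix x assume "x \<in> ch ` {..<2 ^ b}"
    then obtain s where s: "s < 2 ^ b" "x = ch s" by auto
    have "m n s < 2 ^ A * (n + 1)" for n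
      unfolding m_def using rr_lt2[OF s(1)] by simp
    moreover have "2 ^ A * (n0 + 1) \<le> N" "2 ^ A * (n1 + 1) \<le> N" unfolding N_def by simp_all
    ultimately have "m n0 s < N" "m n1 s < N" by (meson order_less_le_trans)+
    then show "x \<in> E \<inter> {..<N}" using s inE[OF s(1)] unfolding ch_def by auto
  qed
  have "card {..<2 ^ b :: nat} \<le> card (E \<inter> {..<N})"
    by (rule card_inj_on_le[OF inj img]) simp
  then have c1: "2 ^ b \<le> cnt E N" unfolding cnt_def by simp
  have NC: "N = 2 ^ b * C" unfolding N_def C_def A_def by (simp add: power_add algebra_simps)
  have "b < 2 ^ b" by (rule less_exp)
  also have "\<dots> \<le> N" unfolding NC using C0 by simp
  finally have "N0 \<le> N" unfolding b_def by simp
  then have "real (cnt E N) \<le> 1 / (2 * real C) * real N" by (rule N0)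
  also have "\<dots> = 2 ^ b / 2" unfolding NC using C0 by simp
  finally have "real (2 ^ b :: nat) \<le> 2 ^ b / 2" using c1 by (metis of_nat_le_iff order_trans)
  then show False by simp
qed

theorem proposition3p2:
  shows "asymp_automatic 2 kappa_parity \<and>
         \<not> (\<exists>g :: nat \<Rightarrow> nat. (\<forall>n. g n \<in> {0, 1}) \<and> automatic 2 g \<and> asymp_eq kappa_parity g)"
  using part1 part2 by blast

end
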